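(* For every $h\in R$, the binary representation of $h$ does not contain $11$ as a contiguous substring.
   Context: Stern's sequence $(a(n))_{n\ge0}$: $a(0)=0$, $a(1)=1$, $a(2n)=a(n)$, $a(2n+1)=a(n)+a(n+1)$; $s(n)=a(n+1)$ for $n\ge0$. $R$ is the set of record-setters of $s$, i.e. indices $v\ge0$ with $s(i)<s(v)$ for all $i<v$. The binary representation of a positive integer has no leading zeros; $0$ is represented by the string $0$. *)

theory Defs
  imports Main "HOL-Library.Sublist"
begin

function stern :: "nat \<Rightarrow> nat" where
  "stern n = (if n = 0 then 0 else if n = 1 then 1
              else if even n then stern (n div 2)
              else stern (n div 2) + stern (n div 2 + 1))"
  by pat_completeness auto
termination by (relation "measure id") (auto elim!: oddE)

definition s :: "nat \<Rightarrow> nat" where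
  "s n = stern (n + 1)"

definition R :: "nat set" where
  "R = {v. \<forall>i<v. s i < s v}"

fun bin_aux :: "nat \<Rightarrow> nat list" where
  "bin_aux n = (if n = 0 then [] else bin_aux (n div 2) @ [n mod 2])"

definition bin :: "nat \<Rightarrow> nat list" where
  "bin n = (if n = 0 then [0] else bin_aux n)"

end

theory Submission
  imports Defs
begin

declare stern.simps[simp del] bin_aux.simps[simp del]

lemma stern0: "stern 0 = 0" by (subst stern.simps) simp
lemma stern1: "stern 1 = 1" by (subst stern.simps) simp
lemma stern1': "stern (Suc 0) = Suc 0" by (subst stern.simps) simp

lemma stern_even: "stern (2*n) = stern n"
proof (cases "n = 0")
  case True then show ?thesis by simp
next
  case False then show ?thesis by (subst stern.simps) simp
qed

lemma stern_odd: "stern (2*n+1) = stern n + stern (n+1)"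
proof (cases "n = 0")
  case True then show ?thesis by (simp add: stern0 stern1)
next
  case False then show ?thesis by (subst stern.simps) simp
qed

lemma stern_even2: "stern (2*n+2) = stern (n+1)"
  using stern_even[of "n+1"] by (simp add: algebra_simps)

lemma stern_oddS: "stern (Suc (2*n)) = stern n + stern (Suc n)"
  using stern_odd[of n] by simp
lemma stern_evenS: "stern (Suc (Suc (2*n))) = stern (Suc n)"
  using stern_even2[of n] by simp

datatype m2 = M2 nat nat nat nat

fun mm :: "m2 \<Rightarrow> m2 \<Rightarrow> m2" where
  "mm (M2 a b c d) (M2 e f g h) = M2 (a*e+b*g) (a*f+b*h) (c*e+d*g) (c*f+d*h)"

fun le2 :: "m2 \<Rightarrow> m2 \<Rightarrow> bool" where
  "le2 (M2 a b c d) (M2 e f g h) = (a \<le> e \<and> b \<le> f \<and> c \<le> g \<and> d \<le> h)"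

fun b4 :: "m2 \<Rightarrow> nat" where "b4 (M2 a b c d) = b"
fun c4 :: "m2 \<Rightarrow> nat" where "c4 (M2 a b c d) = c"
fun d4 :: "m2 \<Rightarrow> nat" where "d4 (M2 a b c d) = d"

lemma mm_assoc: "mm (mm A B) C = mm A (mm B C)"
  by (cases A; cases B; cases C) (simp add: algebra_simps)

lemma mm_id: "mm A (M2 (Suc 0) 0 0 (Suc 0)) = A"
  by (cases A) simp

lemma mm_idl: "mm (M2 (Suc 0) 0 0 (Suc 0)) A = A"
  by (cases A) simp

lemma le2_refl: "le2 A A" by (cases A) simp

lemma mm_mono: "le2 A A' \<Longrightarrow> le2 B B' \<Longrightarrow> le2 (mm A B) (mm A' B')"
  by (cases A; cases A'; cases B; cases B') (auto intro!: add_mono mult_mono)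

lemma d4_mm: "d4 (mm A B) = c4 A * b4 B + d4 A * d4 B"
  by (cases A; cases B) simp

lemma le2_d4: "le2 A B \<Longrightarrow> d4 A \<le> d4 B"
  by (cases A; cases B) simp

definition bm :: "nat \<Rightarrow> m2" where
  "bm b = (if b = 0 then M2 1 0 1 1 else M2 1 1 0 1)"

fun Mw :: "nat list \<Rightarrow> m2" where
  "Mw [] = M2 1 0 0 1"
| "Mw (b#w) = mm (Mw w) (bm b)"

lemma Mw_append: "Mw (u@v) = mm (Mw v) (Mw u)"
  by (induction u) (simp_all add: mm_id mm_assoc)

definition vl :: "nat list \<Rightarrow> nat" where
  "vl w = foldl (\<lambda>n b. 2*n+b) 0 w"

lemma foldl_vl: "foldl (\<lambda>n b. 2*n+b) (n::nat) v = n * 2^length v + foldl (\<lambda>n b. 2*n+b) 0 v"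
proof (induction v arbitrary: n)
  case Nil then show ?case by simp
next
  case (Cons b v)
  have e1: "foldl (\<lambda>n b. 2*n+b) n (b#v) = (2*n+b) * 2^length v + foldl (\<lambda>n b. 2*n+b) 0 v"
    using Cons.IH[of "2*n+b"] by simp
  have e2: "foldl (\<lambda>n b. 2*n+b) 0 (b#v) = b * 2^length v + foldl (\<lambda>n b. 2*n+b) 0 v"
    using Cons.IH[of b] by simp
  show ?case unfolding e1 e2 by (simp add: algebra_simps)
qed

lemma vl_append: "vl (u@v) = vl u * 2^length v + vl v"
  unfolding vl_def foldl_append by (rule foldl_vl)

lemma vl_single[simp]: "vl [b] = b" by (simp add: vl_def)

lemma vl_snoc: "vl (w@[x]) = 2 * vl w + x"
  by (simp add: vl_append)

lemma vl_bound: "set w \<subseteq> {0,1} \<Longrightarrow> vl w < 2^length w"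
proof (induction w rule: rev_induct)
  case Nil then show ?case by (simp add: vl_def)
next
  case (snoc x w)
  then have "vl w < 2^length w" "x \<le> 1" by auto
  then show ?case by (simp add: vl_snoc)
qed

lemma Mw_stern: "set w \<subseteq> {0,1} \<Longrightarrow> b4 (Mw w) = stern (vl w) \<and> d4 (Mw w) = stern (vl w + 1)"
proof (induction w rule: rev_induct)
  case Nil then show ?case by (simp add: vl_def stern0 stern1')
next
  case (snoc x w)
  then have IH: "b4 (Mw w) = stern (vl w) \<and> d4 (Mw w) = stern (vl w + 1)" and x: "x = 0 \<or> x = 1"
    by auto
  obtain a b c d where M: "Mw w = M2 a b c d" by (cases "Mw w")
  have E: "Mw (w@[x]) = mm (bm x) (Mw w)" by (simp add: Mw_append mm_idl)
  from x show ?case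
  proof
    assume "x = 0"
    then show ?thesis using IH M E by (simp add: bm_def vl_snoc stern_even stern_odd stern_oddS)
  next
    assume "x = 1"
    then show ?thesis using IH M E
      by (simp add: bm_def vl_snoc stern_odd stern_even2 stern_oddS stern_evenS)
  qed
qed

lemma bin_aux_step: "n > 0 \<Longrightarrow> bin_aux n = bin_aux (n div 2) @ [n mod 2]"
  by (subst bin_aux.simps) simp

lemma bin_aux_props: "set (bin_aux n) \<subseteq> {0,1} \<and> vl (bin_aux n) = n"
proof (induction n rule: bin_aux.induct)
  case (1 n)
  show ?case
  proof (cases "n = 0")
    case True
    have "bin_aux n = []" using True by (subst bin_aux.simps) simp
    then show ?thesis using True by (simp add: vl_def)
  next
    case False
    then have "bin_aux n = bin_aux (n div 2) @ [n mod 2]" by (simp add: bin_aux_step)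
    with 1 False show ?thesis by (auto simp: vl_snoc)
  qed
qed

definition rep :: "nat \<Rightarrow> nat list \<Rightarrow> nat list" where
  "rep k xs = concat (replicate k xs)"

lemma rep_0[simp]: "rep 0 xs = []" by (simp add: rep_def)
lemma rep_Suc: "rep (Suc k) xs = xs @ rep k xs" by (simp add: rep_def)
lemma rep_snoc: "rep k xs @ xs = rep (Suc k) xs"
  by (induction k) (simp_all add: rep_Suc)
lemma rep_len[simp]: "length (rep k xs) = k * length xs" by (induction k) (simp_all add: rep_Suc)
lemma rep_set: "set (rep k [1,0]) \<subseteq> {0,1::nat}" by (simp add: rep_def)
lemma rep_set': "set (rep k [Suc 0,0]) \<subseteq> {0,Suc 0}" by (simp add: rep_def)

lemma Mw_rep: "\<exists>a b. Mw (rep j [1,0]) = M2 a b b (a+b)"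
proof (induction j)
  case 0 then show ?case by (rule exI[of _ 1], rule exI[of _ 0]) simp
next
  case (Suc j)
  then obtain a b where "Mw (rep j [1,0]) = M2 a b b (a+b)" by blast
  then have "Mw (rep (Suc j) [1,0]) = M2 (a+b) (a+2*b) (a+2*b) ((a+b)+(a+2*b))"
    by (simp add: rep_Suc Mw_append bm_def)
  then show ?case by blast
qed

definition G :: "nat list \<Rightarrow> nat list \<Rightarrow> bool" where
  "G W V \<longleftrightarrow> (W = [1,1,1] \<and> V = [1,0,1]) \<or>
     (\<exists>j. W = [1]@rep j [1,0]@[1,0,0] \<and> V = [1,0]@rep (Suc j) [1,0])"

definition S :: "nat list \<Rightarrow> nat list \<Rightarrow> bool" where
  "S W V \<longleftrightarrow> (\<exists>k. W = [1]@rep k [1,0]@[1,0] \<and> V = [1,0]@rep k [1,0]@[0])"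

lemma cover:
  "set v \<subseteq> {0,1} \<Longrightarrow> v \<noteq> [] \<Longrightarrow> last v = 0 \<Longrightarrow>
   \<exists>x W V y. [1::nat]@rep k [1,0]@[1]@v = x@W@y \<and> (G W V \<or> (y = [] \<and> S W V))"
proof (induction "length v" arbitrary: k v rule: less_induct)
  case less
  show ?case
  proof (cases v)
    case Nil with less show ?thesis by simp
  next
    case (Cons c v1)
    show ?thesis
    proof (cases "c = 0")
      case c0: True
      show ?thesis
      proof (cases v1)
        case Nil
        then have "[1::nat]@rep k [1,0]@[1]@v = []@([1]@rep k [1,0]@[1,0])@[]"
          using Cons c0 by simp
        then show ?thesis unfolding S_def by blast
      next
        case (Cons c2 v2)
        show ?thesis
        proof (cases "c2 = 0")
          case True
          then have "[1::nat]@rep k [1,0]@[1]@v = []@([1]@rep k [1,0]@[1,0,0])@v2"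
            using Cons \<open>v = c # v1\<close> c0 by simp
          then show ?thesis unfolding G_def by blast
        next
          case False
          then have c2: "c2 = 1" using less.prems Cons \<open>v = c # v1\<close> by auto
          have v2: "set v2 \<subseteq> {0,1}" "v2 \<noteq> []" "last v2 = 0"
            using less.prems Cons \<open>v = c # v1\<close> c2 by (auto split: if_splits)
          have eq: "[1::nat]@rep k [1,0]@[1]@v = [1]@rep (Suc k) [1,0]@[1]@v2"
            using Cons \<open>v = c # v1\<close> c0 c2 by (simp flip: rep_snoc)
          have "length v2 < length v" using Cons \<open>v = c # v1\<close> by simp
          from less.hyps[OF this v2] eq show ?thesis by metis
        qed
      qed
    next
      case False
      then have c1: "c = 1" using less.prems Cons by auto
      show ?thesis
      proof (cases k)
        case 0
        then have "[1::nat]@rep k [1,0]@[1]@v = []@[1,1,1]@v1"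
          using Cons c1 by simp
        then show ?thesis unfolding G_def by blast
      next
        case (Suc k1)
        have v1: "set v1 \<subseteq> {0,1}" "v1 \<noteq> []" "last v1 = 0"
          using less.prems Cons c1 by (auto split: if_splits)
        have eq: "[1::nat]@rep k [1,0]@[1]@v = ([1]@rep k1 [1,0]@[1,0]) @ ([1]@rep 0 [1,0]@[1]@v1)"
          using Cons c1 Suc by (simp flip: rep_snoc)
        have "length v1 < length v" using Cons by simp
        from less.hyps[OF this v1, of 0] obtain x W V y where
          "[1::nat]@rep 0 [1,0]@[1]@v1 = x@W@y \<and> (G W V \<or> (y = [] \<and> S W V))" by blast
        then show ?thesis using eq
          by (metis append.assoc)
      qed
    qed
  qed
qed

lemma vlt: "length x = length y \<Longrightarrow> set y \<subseteq> {0,1} \<Longrightarrow> vl (p@0#y) < vl (p@1#x)"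
proof -
  assume a: "length x = length y" "set y \<subseteq> {0,1}"
  have b: "vl y < 2^length y" using vl_bound a(2) .
  have e1: "vl (p@0#y) = vl p * 2^(Suc (length y)) + vl y"
    using vl_append[of p "[0]@y"] vl_append[of "[0]" y] by simp
  have e2: "vl (p@1#x) = vl p * 2^(Suc (length x)) + 2^length x + vl x"
    using vl_append[of p "[1]@x"] vl_append[of "[1]" x] by simp
  show ?thesis using a(1) b e1 e2 by simp
qed

lemma rep_cons1: "\<exists>x. rep j [1,0] @ [1::nat] @ z = 1 # x"
  by (cases j) (simp_all add: rep_Suc)

lemma G_props: "G W V \<Longrightarrow> length V = length W \<and> vl V < vl W \<and> set V \<subseteq> {0,1} \<and> le2 (Mw W) (Mw V)"
proof (unfold G_def, elim disjE exE conjE)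
  assume "W = [1,1,1]" "V = [1,0,1]"
  then show ?thesis by (simp add: vl_def bm_def)
next
  fix j assume W: "W = [1]@rep j [1,0]@[1,0,0]" and V: "V = [1,0]@rep (Suc j) [1,0]"
  obtain a b where C: "Mw (rep j [1,0]) = M2 a b b (a+b)" using Mw_rep by blast
  obtain x where x: "rep j [1,0] @ [1::nat] @ [0,0] = 1 # x" using rep_cons1 by blast
  have lx: "length x = 2*j+2" using arg_cong[OF x, of length] by simp
  have "vl ([1]@0#rep (Suc j) [1,0]) < vl ([1]@1#x)"
    by (rule vlt) (simp_all add: lx rep_set rep_set')
  then have "vl V < vl W" using W V x by simp
  moreover have "le2 (Mw W) (Mw V)" using W V C
    by (simp add: Mw_append rep_Suc bm_def algebra_simps)
  ultimately show ?thesis using W V rep_set'[of "Suc j"] by simp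
qed

lemma S_props: "S W V \<Longrightarrow> length V = length W \<and> vl V < vl W \<and> set V \<subseteq> {0,1}
   \<and> c4 (Mw W) \<le> c4 (Mw V) \<and> d4 (Mw W) \<le> d4 (Mw V)"
proof (unfold S_def, elim exE conjE)
  fix k assume W: "W = [1]@rep k [1,0]@[1,0]" and V: "V = [1,0]@rep k [1,0]@[0]"
  obtain a b where C: "Mw (rep k [1,0]) = M2 a b b (a+b)" using Mw_rep by blast
  obtain x where x: "rep k [1,0] @ [1::nat] @ [0] = 1 # x" using rep_cons1 by blast
  have lx: "length x = 2*k+1" using arg_cong[OF x, of length] by simp
  have "vl ([1]@0#(rep k [1,0]@[0])) < vl ([1]@1#x)"
    by (rule vlt) (simp_all add: lx rep_set rep_set')
  then have "vl V < vl W" using W V x by simp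
  moreover have "c4 (Mw W) \<le> c4 (Mw V) \<and> d4 (Mw W) \<le> d4 (Mw V)" using W V C
    by (simp add: Mw_append bm_def algebra_simps)
  ultimately show ?thesis using W V rep_set'[of k] by simp
qed

lemma vl_mid: "length V = length W \<Longrightarrow> vl V < vl W \<Longrightarrow> vl (p@V@y) < vl (p@W@y)"
proof -
  assume a: "length V = length W" "vl V < vl W"
  have "vl V * 2^length y < vl W * 2^length y" using a(2) by simp
  then have "vl (V@y) < vl (W@y)" by (simp add: vl_append)
  then show ?thesis using a(1) by (simp add: vl_append)
qed

theorem mainTheorem6:
  assumes "h \<in> R"
  shows "\<not> sublist [1, 1] (bin h)"
proof
  assume sub: "sublist [1, 1] (bin h)"
  have rec: "\<And>i. i < h \<Longrightarrow> s i < s h" using assms by (simp add: R_def)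
  have h0: "h \<noteq> 0"
  proof
    assume "h = 0"
    then have "sublist [1::nat,1] [0]" using sub by (simp add: bin_def)
    then obtain ps ss where "[0::nat] = ps @ [1,1] @ ss" unfolding sublist_def by blast
    from arg_cong[OF this, of length] show False by simp
  qed
  define w where "w = bin_aux h"
  have bw: "bin h = w" using h0 by (simp add: bin_def w_def)
  have bits: "set w \<subseteq> {0,1}" and vw: "vl w = h" using bin_aux_props[of h] by (auto simp: w_def)
  have ev: "even h"
  proof (rule ccontr)
    assume "odd h"
    then obtain m where m: "h = 2*m+1" using oddE by blast
    then have "m < h" by simp
    from rec[OF this] have "stern (m+1) < stern (2*m+2)" using m by (simp add: s_def)
    then show False by (simp add: stern_evenS)
  qed
  have wl: "w = bin_aux (h div 2) @ [0]"
  proof -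
    have "w = bin_aux (h div 2) @ [h mod 2]" unfolding w_def using h0 by (intro bin_aux_step) simp
    then show ?thesis using ev by simp
  qed
  from sub obtain u0 v where wu: "w = u0@[1,1]@v" using bw unfolding sublist_def by blast
  have lw: "last w = 0" using wl by simp
  have vne: "v \<noteq> []"
  proof
    assume "v = []"
    then have "last w = 1" using wu by simp
    with lw show False by simp
  qed
  have lv: "last v = 0" using lw wu vne by simp
  have bv: "set v \<subseteq> {0,1}" using bits wu by auto
  from cover[OF bv vne lv, of 0] obtain x W V y where
    d: "[1::nat,1]@v = x@W@y" and gs: "G W V \<or> (y = [] \<and> S W V)" by auto
  define p where "p = u0@x"
  have wp: "w = p@W@y" using wu d by (simp add: p_def)
  have bp: "set p \<subseteq> {0,1}" "set y \<subseteq> {0,1}" "set W \<subseteq> {0,1}" using bits wp by auto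
  have sh: "s h = d4 (Mw w)" using Mw_stern[OF bits] vw by (simp add: s_def)
  from gs show False
  proof
    assume g: "G W V"
    note pr = G_props[OF g]
    define i where "i = vl (p@V@y)"
    have bi: "set (p@V@y) \<subseteq> {0,1}" using bp pr by auto
    have "i < h" using vl_mid[of V W p y] pr vw wp by (simp add: i_def)
    from rec[OF this] have lt: "s i < s h" .
    have si: "s i = d4 (Mw (p@V@y))" using Mw_stern[OF bi] by (simp add: s_def i_def)
    have "le2 (Mw (p@W@y)) (Mw (p@V@y))"
      by (simp add: Mw_append) (intro mm_mono le2_refl pr[THEN conjunct2, THEN conjunct2, THEN conjunct2])
    from le2_d4[OF this] have "s h \<le> s i" using sh si wp by simp
    with lt show False by simp
  next
    assume g: "y = [] \<and> S W V"
    note pr = S_props[OF g[THEN conjunct2]]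
    have y0: "y = []" using g by simp
    define i where "i = vl (p@V)"
    have bi: "set (p@V) \<subseteq> {0,1}" using bp pr by auto
    have "i < h" using vl_mid[of V W p y] pr vw wp y0 by (simp add: i_def)
    from rec[OF this] have lt: "s i < s h" .
    have si: "s i = d4 (Mw (p@V))" using Mw_stern[OF bi] by (simp add: s_def i_def)
    have "d4 (Mw (p@W)) \<le> d4 (Mw (p@V))"
      using pr by (simp add: Mw_append d4_mm add_mono mult_right_mono)
    then have "s h \<le> s i" using sh si wp y0 by simp
    with lt show False by simp
  qed
qed

end
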